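(* Consider the two matrix ODEs \[ \text{(A)}\quad \dot E=-G_\varepsilon(E)+\langle G_\varepsilon(E),E\rangle E, \] \[ \text{(B)}\quad \dot Y=-P_YR_\varepsilon(E)+\langle P_YR_\varepsilon(E),E\rangle Y,\qquad E=\Pi_{\mathcal{S}}Y . \] 1. Let $E_\star\in\mathcal{E}_1$ be a stationary point of (A). Assume that $\lambda_k$ and $\lambda_{k+1}$ of $L(W+\varepsilon E_\star)$ are simple, that $G_\varepsilon(E_\star)\neq0$, and that $R_\varepsilon(E_\star)$ has rank $4$. Then there is a symmetric matrix $Y_\star\in\mathcal{M}_4$ with $E_\star=\Pi_{\mathcal{S}}Y_\star$ that is a stationary point of (B). 2. Conversely, let $Y_\star\in\mathcal{M}_4$ be a symmetric stationary point of (B), and set $E_\star=\Pi_{\mathcal{S}}Y_\star$ and $R_\star=R_\varepsilon(E_\star)$. Assume that $\|E_\star\|_F=1$, that $\lambda_k$ and $\lambda_{k+1}$ of $L(W+\varepsilon E_\star)$ are simple, that $R_\star$ has rank $4$, and that $P_{Y_\star}R_\star\neq0$. Then: - $P_{Y_\star}R_\star=R_\star$; - $Y_\star$ is a nonzero real multiple of $R_\star$; - $E_\star$ is a stationary point of (A).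
   Context: A stationary point of an ODE $\dot X=f(X)$ is a point where $f(X)=0$. Let $\mathscr{E}\subseteq\{1,\dots,n\}^2$ be a symmetric edge set, and let $W\in\mathbb{R}^{n\times n}$ be symmetric, entrywise non-negative, with $w_{ij}=0$ for $(i,j)\notin\mathscr{E}$. Let $L(A)=\mathrm{diag}(A\mathbb{1})-A$ with $\mathbb{1}=(1,\dots,1)^T$. Eigenvalues are ordered $\lambda_1\le\dots\le\lambda_n$. The inner product is $\langle X,Y\rangle=\mathrm{trace}(X^TY)$ and $\|\cdot\|_F$ is the Frobenius norm. Let $\mathcal{S}=\{A: a_{ij}=0\ \forall (i,j)\notin\mathscr{E}\}$, with orthogonal projection $\Pi_{\mathcal{S}}$ (zeroing the entries outside $\mathscr{E}$). Let $\mathcal{E}=\mathcal{S}\cap\mathrm{Sym}(\mathbb{R}^{n\times n})$ and $\mathcal{E}_1=\{E\in\mathcal{E}:\|E\|_F=1\}$. Fix $k\in\{2,\dots,n-1\}$ and $\varepsilon>0$. For $E\in\mathcal{E}$ with $\lambda_k,\lambda_{k+1}$ of $L(W+\varepsilon E)$ simple, define the following objects. - $x$ and $y$ are unit eigenvectors for $\lambda_{k+1}$ and $\lambda_k$ respectively. - $z=x\bullet x-y\bullet y$, the componentwise product. - $R_\varepsilon(E)=\tfrac12(z\mathbb{1}^T+\mathbb{1}z^T)-xx^T+yy^T$. - $G_\varepsilon(E)=\Pi_{\mathcal{S}}R_\varepsilon(E)$. $\mathcal{M}_4$ is the manifold of real $n\times n$ matrices of rank exactly 4. $P_Y$ is the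 orthogonal projection onto $T_Y\mathcal{M}_4$. For symmetric $Y=USU^T$, with $U\in\mathbb{R}^{n\times4}$ having orthonormal columns and $S$ symmetric invertible, it is $P_YA=A-(I_n-UU^T)A(I_n-UU^T)$. *)

theory Defs
  imports "HOL-Analysis.Analysis"
begin

type_synonym 'n mat = "real^'n^'n"

definition symm :: "('n::finite) mat \<Rightarrow> bool" where
  "symm A \<longleftrightarrow> transpose A = A"

definition lap :: "('n::finite) mat \<Rightarrow> 'n mat" where
  "lap A = (\<chi> i j. (if i = j then (\<Sum>l\<in>UNIV. A $ i $ l) else 0) - A $ i $ j)"

definition finner :: "('n::finite) mat \<Rightarrow> 'n mat \<Rightarrow> real" where
  "finner X Y = trace (transpose X ** Y)"

definition fnorm :: "('n::finite) mat \<Rightarrow> real" where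
  "fnorm X = sqrt (finner X X)"

definition eigenspace :: "('n::finite) mat \<Rightarrow> real \<Rightarrow> (real^'n) set" where
  "eigenspace A \<mu> = {v. A *v v = \<mu> *\<^sub>R v}"

definition is_eigenvalue :: "('n::finite) mat \<Rightarrow> real \<Rightarrow> bool" where
  "is_eigenvalue A \<mu> \<longleftrightarrow> (\<exists>v. v \<noteq> 0 \<and> A *v v = \<mu> *\<^sub>R v)"

definition eig_count :: "('n::finite) mat \<Rightarrow> real \<Rightarrow> nat" where
  "eig_count A t = (\<Sum>\<mu>\<in>{\<mu>. is_eigenvalue A \<mu> \<and> \<mu> \<le> t}. dim (eigenspace A \<mu>))"

text \<open>lam A k = \<lambda>_k(A) (1-based), the k-th smallest eigenvalue counted with multiplicity.\<close>
definition lam :: "('n::finite) mat \<Rightarrow> nat \<Rightarrow> real" where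
  "lam A k = Inf {t. k \<le> eig_count A t}"

definition simple_eig :: "('n::finite) mat \<Rightarrow> nat \<Rightarrow> bool" where
  "simple_eig A k \<longleftrightarrow> dim (eigenspace A (lam A k)) = 1"

text \<open>A unit eigenvector (unique up to sign when the eigenvalue is simple).\<close>
definition unit_eigvec :: "('n::finite) mat \<Rightarrow> real \<Rightarrow> real^'n" where
  "unit_eigvec A \<mu> = (SOME v. norm v = 1 \<and> A *v v = \<mu> *\<^sub>R v)"

definition Rmat :: "('n::finite) mat \<Rightarrow> real \<Rightarrow> nat \<Rightarrow> 'n mat \<Rightarrow> 'n mat" where
  "Rmat W \<epsilon> k E =
    (let Lm = lap (W + \<epsilon> *\<^sub>R E);
         x = unit_eigvec Lm (lam Lm (k + 1));
         y = unit_eigvec Lm (lam Lm k);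
         z = (\<chi> i. x $ i * x $ i - y $ i * y $ i)
     in (\<chi> i j. (z $ i + z $ j) / 2 - x $ i * x $ j + y $ i * y $ j))"

definition projS :: "('n \<times> 'n) set \<Rightarrow> ('n::finite) mat \<Rightarrow> 'n mat" where
  "projS Ed A = (\<chi> i j. if (i, j) \<in> Ed then A $ i $ j else 0)"

definition Gmat :: "('n \<times> 'n) set \<Rightarrow> ('n::finite) mat \<Rightarrow> real \<Rightarrow> nat \<Rightarrow> 'n mat \<Rightarrow> 'n mat" where
  "Gmat Ed W \<epsilon> k E = projS Ed (Rmat W \<epsilon> k E)"

text \<open>Tangent-space projection P_Y for symmetric rank-4 Y = U S U^T.\<close>
definition PY :: "('n::finite) mat \<Rightarrow> 'n mat \<Rightarrow> 'n mat" where
  "PY Y A =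
    (let U = (SOME U :: real^4^'n. \<exists>S :: real^4^4.
                 transpose U ** U = mat 1 \<and> transpose S = S \<and> invertible S \<and>
                 Y = U ** S ** transpose U);
         Q = mat 1 - U ** transpose U
     in A - Q ** A ** Q)"

definition odeA :: "('n \<times> 'n) set \<Rightarrow> ('n::finite) mat \<Rightarrow> real \<Rightarrow> nat \<Rightarrow> 'n mat \<Rightarrow> 'n mat" where
  "odeA Ed W \<epsilon> k E = - Gmat Ed W \<epsilon> k E + finner (Gmat Ed W \<epsilon> k E) E *\<^sub>R E"

definition odeB :: "('n \<times> 'n) set \<Rightarrow> ('n::finite) mat \<Rightarrow> real \<Rightarrow> nat \<Rightarrow> 'n mat \<Rightarrow> 'n mat" where
  "odeB Ed W \<epsilon> k Y =
    (let E = projS Ed Y; P = PY Y (Rmat W \<epsilon> k E)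
     in - P + finner P E *\<^sub>R Y)"

end

theory Submission
  imports Defs
begin

declare transpose_matrix_vector[simp del] vector_transpose_matrix[simp del]

lemma finner_sum: "finner X Y = (\<Sum>i\<in>UNIV. \<Sum>j\<in>UNIV. X $ j $ i * Y $ j $ i)"
  by (simp add: finner_def trace_def matrix_matrix_mult_def transpose_def)

lemma finner_scaleR_left: "finner (c *\<^sub>R X) Y = c * finner X Y"
  by (simp add: finner_sum sum_distrib_left mult.assoc)

lemma finner_projS:
  assumes "projS Ed E = E"
  shows "finner (projS Ed X) E = finner X E"
proof -
  have "\<And>i j. projS Ed X $ j $ i * E $ j $ i = X $ j $ i * E $ j $ i"
  proof -
    fix i j
    have "E $ j $ i = projS Ed E $ j $ i" using assms by simp
    then show "projS Ed X $ j $ i * E $ j $ i = X $ j $ i * E $ j $ i"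
      by (cases "(j, i) \<in> Ed") (auto simp: projS_def)
  qed
  then show ?thesis by (simp only: finner_sum)
qed

lemma projS_scaleR: "projS Ed (c *\<^sub>R X) = c *\<^sub>R projS Ed X"
  by (simp add: projS_def vec_eq_iff)

lemma Rmat_symm: "transpose (Rmat W e k E) = Rmat W e k E"
  by (simp add: Rmat_def Let_def transpose_def vec_eq_iff algebra_simps)

lemma rank_scaleR:
  fixes A :: "real^'n^'m"
  assumes "c \<noteq> 0"
  shows "rank (c *\<^sub>R A) = rank A"
proof -
  have "range (\<lambda>x. (c *\<^sub>R A) *v x) = range (\<lambda>x. A *v x)"
  proof (intro set_eqI iffI)
    fix y assume "y \<in> range (\<lambda>x. (c *\<^sub>R A) *v x)"
    then obtain x where "y = (c *\<^sub>R A) *v x" by auto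
    then have "y = A *v (c *\<^sub>R x)" by (simp add: matrix_scaleR_vector_ac)
    then show "y \<in> range (\<lambda>x. A *v x)" by auto
  next
    fix y assume "y \<in> range (\<lambda>x. A *v x)"
    then obtain x where "y = A *v x" by auto
    then have "y = (c *\<^sub>R A) *v ((1/c) *\<^sub>R x)" using assms
      by (simp add: matrix_scaleR_vector_ac[symmetric])
    then show "y \<in> range (\<lambda>x. (c *\<^sub>R A) *v x)" by auto
  qed
  then show ?thesis by (simp add: rank_dim_range)
qed

lemma U_exists:
  fixes Y :: "real^'n::finite^'n"
  assumes sym: "transpose Y = Y" and rk: "rank Y = 4"
  shows "\<exists>U :: real^4^'n. \<exists>S :: real^4^4.
           transpose U ** U = mat 1 \<and> transpose S = S \<and> invertible S \<and>
           Y = U ** S ** transpose U"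
proof -
  define V where "V = range (\<lambda>x. Y *v x)"
  have subV: "subspace V" unfolding V_def
    by (rule linear_subspace_image[OF matrix_vector_mul_linear subspace_UNIV])
  have dimV: "dim V = 4" using rk by (simp add: rank_dim_range V_def)
  obtain B where B: "B \<subseteq> V" "pairwise orthogonal B" "\<And>x. x \<in> B \<Longrightarrow> norm x = 1"
     "independent B" "card B = dim V" "span B = V"
    using orthonormal_basis_subspace[OF subV] by metis
  have finB: "finite B" using B(5) dimV card_ge_0_finite by force
  have cB: "card (UNIV :: 4 set) = card B" using B(5) dimV by simp
  have "\<exists>h. bij_betw h (UNIV :: 4 set) B"
    by (rule finite_same_card_bij[OF finite finB cB])
  then obtain f where f: "bij_betw f (UNIV :: 4 set) B" by (elim exE)
  have fB: "f i \<in> B" for i using f by (auto simp: bij_betw_def)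
  have fsurj: "b \<in> B \<Longrightarrow> \<exists>i. b = f i" for b using f by (auto simp: bij_betw_def)
  have finj: "f i = f j \<Longrightarrow> i = j" for i j using f by (auto simp: bij_betw_def inj_on_def)
  have fo: "inner (f i) (f j) = (if i = j then 1 else 0)" for i j
  proof (cases "i = j")
    case True then show ?thesis using B(3)[OF fB[of i]] by (simp add: norm_eq_1)
  next
    case False
    then have "f i \<noteq> f j" using finj by blast
    then have "orthogonal (f i) (f j)" using B(2) fB unfolding pairwise_def by blast
    then show ?thesis using False by (simp add: orthogonal_def)
  qed
  define U :: "real^4^'n" where "U = (\<chi> i j. f j $ i)"
  have UtU: "transpose U ** U = mat 1"
    using fo by (simp add: U_def vec_eq_iff matrix_matrix_mult_def transpose_def mat_def inner_vec_def)
  have Uv: "U *v z = (\<Sum>j\<in>UNIV. z $ j *\<^sub>R f j)" for z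
    by (simp add: U_def vec_eq_iff matrix_vector_mult_def mult.commute)
  have Utv: "transpose U *v v = (\<chi> j. inner (f j) v)" for v
    by (simp add: U_def vec_eq_iff matrix_vector_mult_def transpose_def inner_vec_def mult.commute)
  have Utv': "v v* U = (\<chi> j. inner (f j) v)" for v
    using Utv[of v] by (simp add: transpose_matrix_vector)
  have UinV: "U *v z \<in> V" for z
  proof -
    have "U *v z \<in> span B" unfolding Uv
      by (intro span_sum span_mul span_base fB)
    then show ?thesis using B(6) by simp
  qed
  have proj: "U *v (transpose U *v v) = v" if vV: "v \<in> V" for v
  proof -
    define w where "w = v - U *v (transpose U *v v)"
    have wV: "w \<in> span B" unfolding w_def using B(6) subV vV UinV
      by (simp add: subspace_diff)
    have "inner (f i) w = 0" for i
    proof -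
      have "inner (f i) (U *v (transpose U *v v)) = (\<Sum>j\<in>UNIV. inner (f j) v * inner (f i) (f j))"
        by (simp add: Uv Utv inner_sum_right)
      also have "\<dots> = (\<Sum>j\<in>UNIV. if i = j then inner (f j) v else 0)"
        by (rule sum.cong) (auto simp: fo)
      also have "\<dots> = inner (f i) v" by simp
      finally show ?thesis by (simp add: w_def inner_diff_right)
    qed
    then have "\<And>y. y \<in> B \<Longrightarrow> orthogonal w y"
      using fsurj by (metis orthogonal_def inner_commute)
    then have "orthogonal w w" using orthogonal_to_span[OF wV] by blast
    then have "w = 0" by (simp add: orthogonal_def)
    then show ?thesis by (simp add: w_def)
  qed
  have Y1: "(U ** transpose U) ** Y = Y"
    unfolding matrix_eq
  proof
    fix x
    have "Y *v x \<in> V" by (simp add: V_def)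
    then show "(U ** transpose U) ** Y *v x = Y *v x"
      by (simp add: matrix_vector_mul_assoc[symmetric] proj)
  qed
  have Y2: "Y ** (U ** transpose U) = Y"
  proof -
    have "transpose ((U ** transpose U) ** Y) = transpose Y" using Y1 by simp
    then show ?thesis using sym by (simp add: matrix_transpose_mul)
  qed
  define S where "S = transpose U ** Y ** U"
  have YS: "Y = U ** S ** transpose U"
  proof -
    have "U ** S ** transpose U = ((U ** transpose U) ** Y) ** (U ** transpose U)"
      by (simp add: S_def matrix_mul_assoc)
    then show ?thesis using Y1 Y2 by simp
  qed
  have St: "transpose S = S"
    using sym by (simp add: S_def matrix_transpose_mul matrix_mul_assoc)
  have "rank Y \<le> rank S"
  proof -
    have "rank Y \<le> rank (U ** S)" using YS rank_mul_le_left by metis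
    also have "\<dots> \<le> rank S" by (rule rank_mul_le_right)
    finally show ?thesis .
  qed
  moreover have "rank S \<le> CARD(4)" using rank_bound[of S] by simp
  ultimately have "rank S = CARD(4)" using rk by simp
  then have "inj ((*v) S)" using full_rank_injective[of S] by simp
  then have "invertible S"
    by (simp add: invertible_left_inverse matrix_left_invertible_injective)
  then show ?thesis using UtU St YS by blast
qed

lemma PY_props:
  fixes Y :: "real^'n::finite^'n"
  assumes "transpose Y = Y" "rank Y = 4"
  obtains U :: "real^4^'n" and S :: "real^4^4" where
    "transpose U ** U = mat 1" "transpose S = S" "invertible S" "Y = U ** S ** transpose U"
    "\<And>A. PY Y A = A - (mat 1 - U ** transpose U) ** A ** (mat 1 - U ** transpose U)"
proof -
  define U where "U = (SOME U :: real^4^'n. \<exists>S :: real^4^4.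
                 transpose U ** U = mat 1 \<and> transpose S = S \<and> invertible S \<and>
                 Y = U ** S ** transpose U)"
  have "\<exists>S :: real^4^4. transpose U ** U = mat 1 \<and> transpose S = S \<and> invertible S \<and>
                 Y = U ** S ** transpose U"
    unfolding U_def by (rule someI_ex) (rule U_exists[OF assms])
  then obtain S :: "real^4^4" where S: "transpose U ** U = mat 1" "transpose S = S" "invertible S"
      "Y = U ** S ** transpose U" by blast
  have "\<And>A. PY Y A = A - (mat 1 - U ** transpose U) ** A ** (mat 1 - U ** transpose U)"
    by (simp add: PY_def U_def Let_def)
  then show thesis using that S by blast
qed

lemma QU0:
  fixes U :: "real^4^'n::finite"
  assumes "transpose U ** U = mat 1"
  shows "(mat 1 - U ** transpose U) *v (U *v z) = 0"
proof -
  have "(U ** transpose U) *v (U *v z) = U *v ((transpose U ** U) *v z)"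
    by (simp add: matrix_vector_mul_assoc matrix_mul_assoc)
  then show ?thesis using assms by (simp add: matrix_vector_mult_diff_rdistrib)
qed

lemma part1:
  fixes Ed :: "('n::finite \<times> 'n) set" and W E :: "real^'n^'n"
  assumes "projS Ed E = E" "odeA Ed W \<epsilon> k E = 0" "Gmat Ed W \<epsilon> k E \<noteq> 0"
    "rank (Rmat W \<epsilon> k E) = 4"
  shows "\<exists>Y :: real^'n^'n. symm Y \<and> rank Y = 4 \<and> E = projS Ed Y \<and> odeB Ed W \<epsilon> k Y = 0"
proof -
  define G where "G = Gmat Ed W \<epsilon> k E"
  define R where "R = Rmat W \<epsilon> k E"
  define c where "c = finner G E"
  have h: "- G + c *\<^sub>R E = 0" using assms(2) by (simp add: odeA_def G_def c_def)
  have GcE: "G = c *\<^sub>R E"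
  proof -
    have "G = G + (- G + c *\<^sub>R E)" using h by simp
    then show ?thesis by simp
  qed
  have c0: "c \<noteq> 0" using GcE assms(3) G_def by auto
  define Y where "Y = (1/c) *\<^sub>R R"
  have RY: "R = c *\<^sub>R Y" using c0 by (simp add: Y_def)
  have symY: "transpose Y = Y" by (simp add: Y_def transpose_scalar R_def Rmat_symm)
  have rkY: "rank Y = 4" using c0 assms(4) by (simp add: Y_def rank_scaleR R_def)
  have EY: "projS Ed Y = E"
    using c0 by (simp add: Y_def projS_scaleR R_def Gmat_def[symmetric] G_def[symmetric] GcE)
  obtain U :: "real^4^'n" and S :: "real^4^4" where U:
    "transpose U ** U = mat 1" "transpose S = S" "invertible S" "Y = U ** S ** transpose U"
    "\<And>A. PY Y A = A - (mat 1 - U ** transpose U) ** A ** (mat 1 - U ** transpose U)"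
    using PY_props[OF symY rkY] by blast
  have QR: "(mat 1 - U ** transpose U) *v (R *v v) = 0" for v
  proof -
    have "R *v v = U *v (c *\<^sub>R (S *v (transpose U *v v)))"
      by (simp add: RY U(4) matrix_vector_mul_assoc[symmetric] scaleR_matrix_vector_assoc[symmetric]
          matrix_scaleR_vector_ac)
    then show ?thesis using QU0[OF U(1)] by simp
  qed
  have QRQ: "((mat 1 - U ** transpose U) ** R ** (mat 1 - U ** transpose U)) *v x = 0" for x
    by (simp only: matrix_vector_mul_assoc[symmetric] QR)
  have PR: "PY Y R = R"
    unfolding U(5) matrix_eq
    by (simp only: matrix_vector_mult_diff_rdistrib QRQ diff_zero) simp
  have fRE: "finner R E = c"
    using finner_projS[OF assms(1), of R] by (simp add: c_def G_def Gmat_def R_def)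
  have "odeB Ed W \<epsilon> k Y = - R + c *\<^sub>R Y"
    by (simp add: odeB_def Let_def EY R_def[symmetric] PR fRE)
  also have "\<dots> = 0" by (simp add: RY)
  finally show ?thesis using symY rkY EY by (auto simp: symm_def)
qed

lemma part2:
  fixes Ed :: "('n::finite \<times> 'n) set" and W Y :: "real^'n^'n"
  assumes symY: "transpose Y = Y" and rkY: "rank Y = 4" and ode: "odeB Ed W \<epsilon> k Y = 0"
    and nE: "fnorm (projS Ed Y) = 1" and rkR: "rank (Rmat W \<epsilon> k (projS Ed Y)) = 4"
    and P0: "PY Y (Rmat W \<epsilon> k (projS Ed Y)) \<noteq> 0"
  shows "PY Y (Rmat W \<epsilon> k (projS Ed Y)) = Rmat W \<epsilon> k (projS Ed Y) \<and>
         (\<exists>c::real. c \<noteq> 0 \<and> Y = c *\<^sub>R Rmat W \<epsilon> k (projS Ed Y)) \<and>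
         odeA Ed W \<epsilon> k (projS Ed Y) = 0"
proof -
  define E where "E = projS Ed Y"
  define R where "R = Rmat W \<epsilon> k E"
  define P where "P = PY Y R"
  define c where "c = finner P E"
  have h: "- P + c *\<^sub>R Y = 0" using ode by (simp add: odeB_def Let_def P_def R_def E_def c_def)
  have PcY: "P = c *\<^sub>R Y"
  proof -
    have "P = P + (- P + c *\<^sub>R Y)" using h by simp
    then show ?thesis by simp
  qed
  have c0: "c \<noteq> 0" using PcY P0 by (auto simp: P_def R_def E_def)
  obtain U :: "real^4^'n" and S :: "real^4^4" where U:
    "transpose U ** U = mat 1" "transpose S = S" "invertible S" "Y = U ** S ** transpose U"
    "\<And>A. PY Y A = A - (mat 1 - U ** transpose U) ** A ** (mat 1 - U ** transpose U)"
    using PY_props[OF symY rkY] by blast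
  obtain Si :: "real^4^4" where Si: "S ** Si = mat 1"
    using U(3) invertible_right_inverse by blast
  have UtUz: "transpose U *v (U *v z) = z" for z
    using U(1) by (simp add: matrix_vector_mul_assoc)
  have YU: "Y *v (U *v z) = U *v (S *v z)" for z
  proof -
    have "Y *v (U *v z) = U *v (S *v (transpose U *v (U *v z)))"
      by (simp only: U(4) matrix_vector_mul_assoc matrix_mul_assoc)
    then show ?thesis by (simp only: UtUz)
  qed
  have RU: "R *v (U *v z) = c *\<^sub>R (U *v (S *v z))" for z
  proof -
    have eq: "R = P + (mat 1 - U ** transpose U) ** R ** (mat 1 - U ** transpose U)"
      using U(5)[of R] by (simp add: P_def)
    have "R *v (U *v z) = (P + (mat 1 - U ** transpose U) ** R ** (mat 1 - U ** transpose U)) *v (U *v z)"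
      by (rule arg_cong[where f="\<lambda>A. A *v (U *v z)", OF eq])
    also have "\<dots> = P *v (U *v z) +
       (mat 1 - U ** transpose U) *v (R *v ((mat 1 - U ** transpose U) *v (U *v z)))"
      by (simp only: matrix_vector_mult_add_rdistrib matrix_vector_mul_assoc[symmetric])
    also have "\<dots> = P *v (U *v z)" using QU0[OF U(1)] by simp
    also have "\<dots> = c *\<^sub>R (Y *v (U *v z))" by (simp add: PcY scaleR_matrix_vector_assoc)
    also have "\<dots> = c *\<^sub>R (U *v (S *v z))" by (simp only: YU)
    finally show ?thesis .
  qed
  have sub: "range (\<lambda>x. U *v x) \<subseteq> range (\<lambda>x. R *v x)"
  proof
    fix y assume "y \<in> range (\<lambda>x. U *v x)"
    then obtain w where w: "y = U *v w" by auto
    have e1: "S *v ((1/c) *\<^sub>R (Si *v w)) = (1/c) *\<^sub>R w"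
      by (simp only: matrix_vector_mult_scaleR matrix_vector_mul_assoc Si matrix_vector_mul_lid)
    have "R *v (U *v ((1/c) *\<^sub>R (Si *v w))) = c *\<^sub>R (U *v ((1/c) *\<^sub>R w))"
      by (simp only: RU e1)
    also have "\<dots> = y" using c0 by (simp only: matrix_vector_mult_scaleR scaleR_scaleR w) simp
    finally have "R *v (U *v ((1/c) *\<^sub>R (Si *v w))) = y" .
    then show "y \<in> range (\<lambda>x. R *v x)" by (metis rangeI)
  qed
  have injU: "inj ((*v) U)"
  proof (rule injI)
    fix x y assume "U *v x = U *v y"
    then have "(transpose U ** U) *v x = (transpose U ** U) *v y"
      by (simp add: matrix_vector_mul_assoc[symmetric])
    then show "x = y" using U(1) by simp
  qed
  have rU: "rank U = 4" using injU full_rank_injective[of U] by simp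
  have eqr: "range (\<lambda>x. U *v x) = range (\<lambda>x. R *v x)"
  proof (rule subspace_dim_equal[OF _ _ sub])
    show "subspace (range (\<lambda>x. U *v x))"
      by (rule linear_subspace_image[OF matrix_vector_mul_linear subspace_UNIV])
    show "subspace (range (\<lambda>x. R *v x))"
      by (rule linear_subspace_image[OF matrix_vector_mul_linear subspace_UNIV])
    show "dim (range (\<lambda>x. R *v x)) \<le> dim (range (\<lambda>x. U *v x))"
      using rU rkR by (simp add: rank_dim_range[symmetric] R_def E_def)
  qed
  have QR: "(mat 1 - U ** transpose U) *v (R *v v) = 0" for v
  proof -
    have "R *v v \<in> range (\<lambda>x. U *v x)" using eqr by auto
    then obtain w where "R *v v = U *v w" by auto
    then show ?thesis using QU0[OF U(1)] by simp
  qed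
  have QRQ: "((mat 1 - U ** transpose U) ** R ** (mat 1 - U ** transpose U)) *v x = 0" for x
    by (simp only: matrix_vector_mul_assoc[symmetric] QR)
  have PR: "P = R"
    unfolding P_def U(5) matrix_eq
    by (simp only: matrix_vector_mult_diff_rdistrib QRQ diff_zero) simp
  have YR: "Y = (1/c) *\<^sub>R R"
  proof -
    have "(1/c) *\<^sub>R R = (1/c) *\<^sub>R (c *\<^sub>R Y)" using PR PcY by simp
    also have "\<dots> = Y" using c0 by simp
    finally show ?thesis by simp
  qed
  have fEE: "finner E E = 1" using nE by (simp add: fnorm_def E_def)
  have GE: "Gmat Ed W \<epsilon> k E = c *\<^sub>R E"
  proof -
    have "Gmat Ed W \<epsilon> k E = projS Ed R" by (simp add: Gmat_def R_def)
    also have "\<dots> = projS Ed (c *\<^sub>R Y)" using PR PcY by simp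
    also have "\<dots> = c *\<^sub>R E" by (simp add: projS_scaleR E_def)
    finally show ?thesis .
  qed
  have "odeA Ed W \<epsilon> k E = 0"
    by (simp add: odeA_def GE finner_scaleR_left fEE)
  moreover have "(1/c) \<noteq> 0" using c0 by simp
  ultimately show ?thesis unfolding E_def[symmetric] R_def[symmetric]
    using PR[unfolded P_def] YR by blast
qed

theorem theorem4p3:
  fixes Ed :: "('n::finite \<times> 'n) set"
    and W :: "real^'n^'n"
    and \<epsilon> :: real
    and k :: nat
  assumes Ed_sym: "\<And>i j. (i, j) \<in> Ed \<Longrightarrow> (j, i) \<in> Ed"
    and W_sym: "transpose W = W"
    and W_nonneg: "\<And>i j. W $ i $ j \<ge> 0"
    and W_supp: "\<And>i j. (i, j) \<notin> Ed \<Longrightarrow> W $ i $ j = 0"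
    and k_range: "2 \<le> k" "k \<le> CARD('n) - 1"
    and eps_pos: "\<epsilon> > 0"
  shows
   "(\<forall>E :: real^'n^'n.
       (projS Ed E = E \<and> symm E \<and> fnorm E = 1 \<and>
        odeA Ed W \<epsilon> k E = 0 \<and>
        simple_eig (lap (W + \<epsilon> *\<^sub>R E)) k \<and> simple_eig (lap (W + \<epsilon> *\<^sub>R E)) (k + 1) \<and>
        Gmat Ed W \<epsilon> k E \<noteq> 0 \<and> rank (Rmat W \<epsilon> k E) = 4)
       \<longrightarrow> (\<exists>Y :: real^'n^'n. symm Y \<and> rank Y = 4 \<and> E = projS Ed Y \<and>
                              odeB Ed W \<epsilon> k Y = 0))
    \<and>
    (\<forall>Y :: real^'n^'n.
       (let E = projS Ed Y; R = Rmat W \<epsilon> k E in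
        (symm Y \<and> rank Y = 4 \<and> odeB Ed W \<epsilon> k Y = 0 \<and> fnorm E = 1 \<and>
         simple_eig (lap (W + \<epsilon> *\<^sub>R E)) k \<and> simple_eig (lap (W + \<epsilon> *\<^sub>R E)) (k + 1) \<and>
         rank R = 4 \<and> PY Y R \<noteq> 0)
        \<longrightarrow> (PY Y R = R \<and> (\<exists>c::real. c \<noteq> 0 \<and> Y = c *\<^sub>R R) \<and> odeA Ed W \<epsilon> k E = 0)))"
proof (rule conjI)
  show "\<forall>E :: real^'n^'n.
       (projS Ed E = E \<and> symm E \<and> fnorm E = 1 \<and>
        odeA Ed W \<epsilon> k E = 0 \<and>
        simple_eig (lap (W + \<epsilon> *\<^sub>R E)) k \<and> simple_eig (lap (W + \<epsilon> *\<^sub>R E)) (k + 1) \<and>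
        Gmat Ed W \<epsilon> k E \<noteq> 0 \<and> rank (Rmat W \<epsilon> k E) = 4)
       \<longrightarrow> (\<exists>Y :: real^'n^'n. symm Y \<and> rank Y = 4 \<and> E = projS Ed Y \<and>
                              odeB Ed W \<epsilon> k Y = 0)"
  proof (intro allI impI)
    fix E :: "real^'n^'n"
    assume a: "projS Ed E = E \<and> symm E \<and> fnorm E = 1 \<and>
        odeA Ed W \<epsilon> k E = 0 \<and>
        simple_eig (lap (W + \<epsilon> *\<^sub>R E)) k \<and> simple_eig (lap (W + \<epsilon> *\<^sub>R E)) (k + 1) \<and>
        Gmat Ed W \<epsilon> k E \<noteq> 0 \<and> rank (Rmat W \<epsilon> k E) = 4"
    then have h: "projS Ed E = E" "odeA Ed W \<epsilon> k E = 0" "Gmat Ed W \<epsilon> k E \<noteq> 0"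
      "rank (Rmat W \<epsilon> k E) = 4" by auto
    show "\<exists>Y :: real^'n^'n. symm Y \<and> rank Y = 4 \<and> E = projS Ed Y \<and>
                              odeB Ed W \<epsilon> k Y = 0"
      by (rule part1[OF h])
  qed
next
  show "\<forall>Y :: real^'n^'n.
       (let E = projS Ed Y; R = Rmat W \<epsilon> k E in
        (symm Y \<and> rank Y = 4 \<and> odeB Ed W \<epsilon> k Y = 0 \<and> fnorm E = 1 \<and>
         simple_eig (lap (W + \<epsilon> *\<^sub>R E)) k \<and> simple_eig (lap (W + \<epsilon> *\<^sub>R E)) (k + 1) \<and>
         rank R = 4 \<and> PY Y R \<noteq> 0)
        \<longrightarrow> (PY Y R = R \<and> (\<exists>c::real. c \<noteq> 0 \<and> Y = c *\<^sub>R R) \<and> odeA Ed W \<epsilon> k E = 0))"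
    unfolding Let_def
  proof (intro allI impI)
    fix Y :: "real^'n^'n"
    assume a: "symm Y \<and> rank Y = 4 \<and> odeB Ed W \<epsilon> k Y = 0 \<and> fnorm (projS Ed Y) = 1 \<and>
         simple_eig (lap (W + \<epsilon> *\<^sub>R projS Ed Y)) k \<and> simple_eig (lap (W + \<epsilon> *\<^sub>R projS Ed Y)) (k + 1) \<and>
         rank (Rmat W \<epsilon> k (projS Ed Y)) = 4 \<and> PY Y (Rmat W \<epsilon> k (projS Ed Y)) \<noteq> 0"
    then have h: "symm Y" "rank Y = 4" "odeB Ed W \<epsilon> k Y = 0" "fnorm (projS Ed Y) = 1"
      "rank (Rmat W \<epsilon> k (projS Ed Y)) = 4" "PY Y (Rmat W \<epsilon> k (projS Ed Y)) \<noteq> 0"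
      by auto
    then have t: "transpose Y = Y" by (simp add: symm_def)
    show "PY Y (Rmat W \<epsilon> k (projS Ed Y)) = Rmat W \<epsilon> k (projS Ed Y) \<and>
         (\<exists>c::real. c \<noteq> 0 \<and> Y = c *\<^sub>R Rmat W \<epsilon> k (projS Ed Y)) \<and>
         odeA Ed W \<epsilon> k (projS Ed Y) = 0"
      by (rule part2[OF t h(2-6)])
  qed
qed

end
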